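(* Let $p,q\in\mathbb{N}\cup\{0\}$, $N=p+q$, and let $\boldsymbol{\mu}_{p,q}: C_2^N\to C_2=\{\pm1\}$ be defined by \[ \boldsymbol{\mu}_{p,q}\big(\mathbf{e}_1^{a_1}\cdots\mathbf{e}_N^{a_N}\big) = (-1)^{\,a_{p+1}+\cdots+a_N + \sum_{1\le i<j\le N} a_ia_j}, \qquad a_i\in\{0,1\}, \] where $\mathbf{e}_1,\ldots,\mathbf{e}_N$ are the canonical generators of $C_2^N$. Then \[ \mathrm{Arf}(\boldsymbol{\mu}_{p,q}) = \mathrm{sign}\Big(\cos\frac{(p-q)\pi}{4} + \sin\frac{(p-q)\pi}{4}\Big) = \begin{cases} 1 & \text{if } p-q+1 \equiv 1,2,3 \pmod 8,\\ 0 & \text{if } p-q+1\equiv 0,4 \pmod 8,\\ -1 & \text{if } p-q+1 \equiv 5,6,7\pmod 8.\end{cases} \]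
   Context: $C_2=\{\pm1\}$ is the multiplicative group of order $2$ and $\mathbf{e}_i\in C_2^N$ has $-1$ in position $i$ and $1$ elsewhere. For a map $\boldsymbol{\mu}: C_2^N\to C_2$, the Arf invariant is $\mathrm{Arf}(\boldsymbol{\mu}) = 1$ if $|\boldsymbol{\mu}^{-1}(+1)| > |\boldsymbol{\mu}^{-1}(-1)|$, $0$ if they are equal, and $-1$ if $|\boldsymbol{\mu}^{-1}(+1)| < |\boldsymbol{\mu}^{-1}(-1)|$. $\mathrm{sign}(x)\in\{1,0,-1\}$ is the sign of the real number $x$, with $\mathrm{sign}(0)=0$. *)

theory Defs
  imports Complex_Main
begin

text \<open>C_2 = {1,-1} as integers. An element of C_2^N is a function x with
  x i \<in> {1,-1} for i \<in> {1..N} and x i = 1 outside (extensional).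
  e_i has -1 in position i and 1 elsewhere.\<close>

definition C2N :: "nat \<Rightarrow> (nat \<Rightarrow> int) set" where
  "C2N N = {x. (\<forall>i\<in>{1..N}. x i = 1 \<or> x i = -1) \<and> (\<forall>i. i \<notin> {1..N} \<longrightarrow> x i = 1)}"

definition gen_e :: "nat \<Rightarrow> nat \<Rightarrow> int" where
  "gen_e i = (\<lambda>j. if j = i then -1 else 1)"

definition expo :: "(nat \<Rightarrow> int) \<Rightarrow> nat \<Rightarrow> nat" where
  "expo x i = (if x i = -1 then 1 else 0)"

definition mu_pq :: "nat \<Rightarrow> nat \<Rightarrow> (nat \<Rightarrow> int) \<Rightarrow> int" where
  "mu_pq p q x = (let N = p + q; a = expo x in
     (-1) ^ ((\<Sum>i\<in>{p+1..N}. a i) + (\<Sum>(i,j)\<in>{(i,j). 1 \<le> i \<and> i < j \<and> j \<le> N}. a i * a j)))"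

definition Arf :: "nat \<Rightarrow> ((nat \<Rightarrow> int) \<Rightarrow> int) \<Rightarrow> int" where
  "Arf N mu = sgn (int (card {x\<in>C2N N. mu x = 1}) - int (card {x\<in>C2N N. mu x = -1}))"

end

theory Submission
  imports Defs Complex_Main
begin


lemma C2N_0: "C2N 0 = {\<lambda>_. 1}" by (auto simp: C2N_def)

lemma C2N_Suc: "C2N (Suc N) = (\<lambda>(x,b). x(Suc N := b)) ` (C2N N \<times> {1,-1})"
proof (rule set_eqI, rule iffI)
  fix y assume y: "y \<in> C2N (Suc N)"
  let ?x = "y(Suc N := 1)"
  have h1: "?x \<in> C2N N" using y by (auto simp: C2N_def)
  have h2: "y (Suc N) \<in> {1,-1}" using y by (auto simp: C2N_def)
  show "y \<in> (\<lambda>(x,b). x(Suc N := b)) ` (C2N N \<times> {1,-1})"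
    by (rule image_eqI[where x="(?x, y (Suc N))"]) (use h1 h2 in simp_all)
next
  fix y assume "y \<in> (\<lambda>(x,b). x(Suc N := b)) ` (C2N N \<times> {1,-1})"
  then obtain x b where x: "x \<in> C2N N" and b: "b \<in> {1,-1}" and y: "y = x(Suc N := b)" by auto
  show "y \<in> C2N (Suc N)" unfolding C2N_def mem_Collect_eq
  proof (intro conjI allI ballI impI)
    fix i assume "i \<in> {1..Suc N}"
    then show "y i = 1 \<or> y i = -1" using x b unfolding y C2N_def by (cases "i = Suc N") auto
  next
    fix i assume "i \<notin> {1..Suc N}"
    then show "y i = 1" using x unfolding y C2N_def by auto
  qed
qed

lemma C2N_inj: "inj_on (\<lambda>(x,b). x(Suc N := b)) (C2N N \<times> {1,-1})"
proof (rule inj_onI, clarify)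
  fix x b x' b' assume x: "x \<in> C2N N" and x': "x' \<in> C2N N"
    and e: "x(Suc N := b) = x'(Suc N := b')"
  from e have "b = b'" by (metis fun_upd_same)
  moreover have "x = x'"
  proof
    fix i show "x i = x' i"
    proof (cases "i = Suc N")
      case True then show ?thesis using x x' by (auto simp: C2N_def)
    next
      case False then show ?thesis using fun_cong[OF e, of i] by simp
    qed
  qed
  ultimately show "x = x' \<and> b = b'" by simp
qed

lemma finite_C2N: "finite (C2N N)"
  by (induction N) (simp_all add: C2N_0 C2N_Suc)

lemma sum_C2N_Suc:
  "(\<Sum>x\<in>C2N (Suc N). f x) = (\<Sum>x\<in>C2N N. f (x(Suc N := 1)) + f (x(Suc N := -1)))"
proof -
  have "(\<Sum>x\<in>C2N (Suc N). f x) = (\<Sum>(x,b)\<in>C2N N \<times> {1,-1}. f (x(Suc N := b)))"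
    unfolding C2N_Suc by (subst sum.reindex[OF C2N_inj]) (simp add: case_prod_unfold)
  also have "\<dots> = (\<Sum>x\<in>C2N N. \<Sum>b\<in>{1,-1}. f (x(Suc N := b)))"
    by (rule sum.cartesian_product[symmetric])
  also have "\<dots> = (\<Sum>x\<in>C2N N. f (x(Suc N := 1)) + f (x(Suc N := -1)))"
    by simp
  finally show ?thesis .
qed

lemma sum_prod_C2N:
  fixes w :: "nat \<Rightarrow> nat \<Rightarrow> 'a::comm_ring_1"
  shows "(\<Sum>x\<in>C2N N. \<Prod>i\<in>{1..N}. w i (expo x i)) = (\<Prod>i\<in>{1..N}. w i 0 + w i 1)"
proof (induction N)
  case 0 then show ?case by (simp add: C2N_0)
next
  case (Suc N)
  have pr: "(\<Prod>i\<in>{1..Suc N}. w i (expo (x(Suc N := b)) i))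
      = (\<Prod>i\<in>{1..N}. w i (expo x i)) * w (Suc N) (expo (x(Suc N := b)) (Suc N))" for x b
  proof -
    have "(\<Prod>i\<in>{1..N}. w i (expo (x(Suc N := b)) i)) = (\<Prod>i\<in>{1..N}. w i (expo x i))"
      by (rule prod.cong) (auto simp: expo_def)
    then show ?thesis by (simp add: prod.cl_ivl_Suc)
  qed
  have "(\<Sum>x\<in>C2N (Suc N). \<Prod>i\<in>{1..Suc N}. w i (expo x i))
     = (\<Sum>x\<in>C2N N. (\<Prod>i\<in>{1..N}. w i (expo x i)) * (w (Suc N) 0 + w (Suc N) 1))"
    unfolding sum_C2N_Suc pr by (simp add: expo_def algebra_simps)
  also have "\<dots> = (\<Prod>i\<in>{1..N}. w i 0 + w i 1) * (w (Suc N) 0 + w (Suc N) 1)"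
    by (simp only: sum_distrib_right[symmetric] Suc.IH)
  finally show ?case by (simp add: prod.cl_ivl_Suc)
qed

lemma pair_sum:
  fixes a :: "nat \<Rightarrow> nat"
  assumes "\<And>i. a i \<le> 1"
  shows "2 * (\<Sum>(i,j)\<in>{(i,j). 1 \<le> i \<and> i < j \<and> j \<le> N}. a i * a j)
         = (\<Sum>i\<in>{1..N}. a i) * ((\<Sum>i\<in>{1..N}. a i) - 1)"
proof (induction N)
  case 0
  have e: "{(i, j). 1 \<le> i \<and> i < j \<and> j \<le> (0::nat)} = {}" by auto
  show ?case unfolding e by simp
next
  case (Suc N)
  let ?P = "\<lambda>N. {(i,j). 1 \<le> i \<and> i < j \<and> j \<le> N}"
  have fin: "finite (?P N)"
    by (rule finite_subset[of _ "{1..N} \<times> {1..N}"]) auto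
  have eq: "?P (Suc N) = ?P N \<union> (\<lambda>i. (i, Suc N)) ` {1..N}"
    by (auto simp: le_Suc_eq)
  have disj: "?P N \<inter> (\<lambda>i. (i, Suc N)) ` {1..N} = {}" by auto
  have "(\<Sum>(i,j)\<in>?P (Suc N). a i * a j)
      = (\<Sum>(i,j)\<in>?P N. a i * a j) + (\<Sum>(i,j)\<in>(\<lambda>i. (i, Suc N)) ` {1..N}. a i * a j)"
    unfolding eq by (rule sum.union_disjoint[OF fin _ disj]) simp
  also have "(\<Sum>(i,j)\<in>(\<lambda>i. (i, Suc N)) ` {1..N}. a i * a j) = (\<Sum>i\<in>{1..N}. a i) * a (Suc N)"
    by (subst sum.reindex) (auto simp: inj_on_def sum_distrib_right)
  finally have h: "(\<Sum>(i,j)\<in>?P (Suc N). a i * a j) = (\<Sum>(i,j)\<in>?P N. a i * a j) + (\<Sum>i\<in>{1..N}. a i) * a (Suc N)" .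
  obtain k where k: "k = (\<Sum>i\<in>{1..N}. a i)" by simp
  have s: "a (Suc N) = 0 \<or> a (Suc N) = 1" using assms[of "Suc N"] by auto
  have S: "(\<Sum>i\<in>{1..Suc N}. a i) = k + a (Suc N)" by (simp add: k)
  have IH: "2 * (\<Sum>(i,j)\<in>?P N. a i * a j) = k*(k-1)" using Suc.IH k by simp
  have kk: "k * (k - 1) + 2 * k = (k + 1) * k" by (cases k) auto
  from s show ?case
  proof
    assume "a (Suc N) = 0" then show ?case unfolding h S using IH by simp
  next
    assume "a (Suc N) = 1" then show ?case unfolding h S k[symmetric] using IH kk
      by (simp add: add_mult_distrib2)
  qed
qed

lemma sign_lemma: "Re ((1 - \<i>) * \<i>^k) = (-1::real)^(k*(k-1) div 2)"
proof (induction k rule: less_induct)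
  case (less k)
  show ?case
  proof (cases "k < 4")
    case True
    then have "k = 0 \<or> k = 1 \<or> k = 2 \<or> k = 3" by auto
    moreover have "\<i>^3 = -\<i>" by (simp add: power3_eq_cube)
    ultimately show ?thesis by auto
  next
    case False
    then obtain m where m: "k = m + 4" by (metis add.commute le_Suc_ex not_less)
    have e1: "\<i>^k = \<i>^m" unfolding m by (simp add: power_add)
    have "(m+4)*(m+4-1) = m*(m-1) + 2*(4*m+6)"
      by (cases m) (auto simp: algebra_simps)
    then have e2: "k*(k-1) div 2 = m*(m-1) div 2 + (4*m+6)" unfolding m by simp
    have "(-1::real)^(k*(k-1) div 2) = (-1)^(m*(m-1) div 2)"
      unfolding e2 power_add by (simp add: power_mult)
    with less[of m] m e1 show ?thesis by simp
  qed
qed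

lemma split_ivl: "{1..p+q} = {1..p} \<union> {p+1..p+(q::nat)}" "{1..p} \<inter> {p+1..p+q} = {}"
  by auto

lemma Re_ofr: "Re (complex_of_real c * z) = c * Re z" by simp

lemma mu_real:
  "real_of_int (mu_pq p q x) = Re ((1-\<i>) * (\<Prod>i\<in>{1..p+q}. (if i \<le> p then \<i> else -\<i>) ^ expo x i))"
proof -
  define a where "a = expo x"
  define k where "k = (\<Sum>i\<in>{1..p+q}. a i)"
  define m where "m = (\<Sum>i\<in>{p+1..p+q}. a i)"
  define P where "P = (\<Sum>(i,j)\<in>{(i,j). 1 \<le> i \<and> i < j \<and> j \<le> p+q}. a i * a j)"
  have "2 * P = k * (k-1)" unfolding P_def k_def
    by (rule pair_sum) (simp add: a_def expo_def)
  then have P: "P = k*(k-1) div 2" by simp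
  have mu: "mu_pq p q x = (-1)^(m + P)"
    by (simp add: mu_pq_def Let_def a_def m_def P_def)
  have k: "k = (\<Sum>i\<in>{1..p}. a i) + m"
    unfolding k_def m_def split_ivl(1) by (rule sum.union_disjoint) (auto)
  have "(\<Prod>i\<in>{1..p+q}. (if i \<le> p then \<i> else -\<i>) ^ a i)
     = (\<Prod>i\<in>{1..p}. (if i \<le> p then \<i> else -\<i>) ^ a i) * (\<Prod>i\<in>{p+1..p+q}. (if i \<le> p then \<i> else -\<i>) ^ a i)"
    unfolding split_ivl(1) by (rule prod.union_disjoint) auto
  also have "(\<Prod>i\<in>{1..p}. (if i \<le> p then \<i> else -\<i>) ^ a i) = (\<Prod>i\<in>{1..p}. \<i> ^ a i)"
    by (rule prod.cong) auto
  also have "(\<Prod>i\<in>{p+1..p+q}. (if i \<le> p then \<i> else -\<i>) ^ a i) = (\<Prod>i\<in>{p+1..p+q}. (-\<i>) ^ a i)"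
    by (rule prod.cong) auto
  also have "(\<Prod>i\<in>{1..p}. \<i> ^ a i) * (\<Prod>i\<in>{p+1..p+q}. (-\<i>) ^ a i) = \<i>^(\<Sum>i\<in>{1..p}. a i) * (-\<i>)^m"
    by (simp add: power_sum m_def)
  also have "\<dots> = (-1)^m * \<i>^k"
    unfolding k power_add power_minus[of "\<i>"] by (simp only: mult_ac)
  also have "(-1::complex)^m = complex_of_real ((-1)^m)" by simp
  finally have pr: "(\<Prod>i\<in>{1..p+q}. (if i \<le> p then \<i> else -\<i>) ^ expo x i) = complex_of_real ((-1)^m) * \<i>^k"
    by (simp add: a_def)
  have "(1-\<i>) * (complex_of_real ((-1)^m) * \<i>^k) = complex_of_real ((-1)^m) * ((1-\<i>) * \<i>^k)"
    by (simp only: mult_ac)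
  then have "Re ((1-\<i>) * (\<Prod>i\<in>{1..p+q}. (if i \<le> p then \<i> else -\<i>) ^ expo x i)) = (-1)^m * Re ((1-\<i>) * \<i>^k)"
    unfolding pr by (simp only: Re_ofr)
  also have "\<dots> = (-1)^m * (-1)^P" by (simp only: sign_lemma P)
  also have "\<dots> = real_of_int (mu_pq p q x)" unfolding mu by (simp add: power_add)
  finally show ?thesis by simp
qed



definition cls :: "int \<Rightarrow> real" where
  "cls D = (if D mod 8 \<in> {1, 2, 3} then 1 else if D mod 8 \<in> {0, 4} then 0 else -1)"

lemma tab1: "r < 8 \<Longrightarrow> sgn (Re ((1-\<i>)*(1+\<i>)^r)) = cls (int r + 1)"
proof -
  assume "r < 8"
  then have "r = 0 \<or> r = 1 \<or> r = 2 \<or> r = 3 \<or> r = 4 \<or> r = 5 \<or> r = 6 \<or> r = 7" by auto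
  then show ?thesis by (elim disjE) (simp_all add: cls_def eval_nat_numeral)
qed

lemma tab2: "r < 8 \<Longrightarrow> sgn (Re ((1-\<i>)^(r+1))) = cls (1 - int r)"
proof -
  assume "r < 8"
  then have "r = 0 \<or> r = 1 \<or> r = 2 \<or> r = 3 \<or> r = 4 \<or> r = 5 \<or> r = 6 \<or> r = 7" by auto
  then show ?thesis by (elim disjE) (simp_all add: cls_def eval_nat_numeral)
qed

lemma v3: "cos (3 * pi / 4) + sin (3 * pi / 4) = 0"
proof -
  have e: "3 * pi / 4 = pi/4 + pi/2" by simp
  show ?thesis unfolding e unfolding cos_add sin_add by (simp add: cos_45 sin_45)
qed
lemma v5: "cos (5 * pi / 4) + sin (5 * pi / 4) = - sqrt 2"
proof -
  have e: "5 * pi / 4 = pi/4 + pi" by simp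
  show ?thesis unfolding e unfolding cos_periodic_pi sin_periodic_pi by (simp add: cos_45 sin_45)
qed
lemma v6: "cos (3 * pi / 2) + sin (3 * pi / 2) = -1"
proof -
  have e: "3 * pi / 2 = pi/2 + pi" by simp
  show ?thesis unfolding e unfolding cos_periodic_pi sin_periodic_pi by simp
qed
lemma v7: "cos (7 * pi / 4) + sin (7 * pi / 4) = 0"
proof -
  have e: "7 * pi / 4 = (pi/4 + pi/2) + pi" by simp
  show ?thesis unfolding e unfolding cos_periodic_pi sin_periodic_pi unfolding cos_add sin_add
    by (simp add: cos_45 sin_45)
qed

lemma tab3: "0 \<le> r \<Longrightarrow> r < 8 \<Longrightarrow> sgn (cos (of_int r * pi / 4) + sin (of_int r * pi / 4)) = cls (r + 1)"
proof -
  assume "0 \<le> r" "r < 8"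
  then have "r = 0 \<or> r = 1 \<or> r = 2 \<or> r = 3 \<or> r = 4 \<or> r = 5 \<or> r = 6 \<or> r = 7" by auto
  moreover have "sqrt 2 > 0" by simp
  ultimately show ?thesis
    by (elim disjE) (simp_all add: cls_def cos_45 sin_45 v3 v5 v6 v7)
qed



lemma S_real: "(\<Sum>x\<in>C2N (p+q). real_of_int (mu_pq p q x)) = Re ((1-\<i>) * (1+\<i>)^p * (1-\<i>)^q)"
proof -
  let ?w = "\<lambda>i e. (if i \<le> p then \<i> else -\<i>) ^ e"
  have "(\<Sum>x\<in>C2N (p+q). real_of_int (mu_pq p q x))
      = Re ((1-\<i>) * (\<Sum>x\<in>C2N (p+q). \<Prod>i\<in>{1..p+q}. ?w i (expo x i)))"
    by (simp add: mu_real sum_distrib_left)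
  also have "(\<Sum>x\<in>C2N (p+q). \<Prod>i\<in>{1..p+q}. ?w i (expo x i)) = (\<Prod>i\<in>{1..p+q}. ?w i 0 + ?w i 1)"
    by (rule sum_prod_C2N)
  also have "\<dots> = (\<Prod>i\<in>{1..p}. ?w i 0 + ?w i 1) * (\<Prod>i\<in>{p+1..p+q}. ?w i 0 + ?w i 1)"
    unfolding split_ivl(1) by (rule prod.union_disjoint) auto
  also have "(\<Prod>i\<in>{1..p}. ?w i 0 + ?w i 1) = (\<Prod>i\<in>{1..p}. 1 + \<i>)"
    by (rule prod.cong) auto
  also have "(\<Prod>i\<in>{p+1..p+q}. ?w i 0 + ?w i 1) = (\<Prod>i\<in>{p+1..p+q}. 1 - \<i>)"
    by (rule prod.cong) auto
  finally show ?thesis by (simp add: mult.assoc)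
qed

lemma mu_vals: "mu_pq p q x = 1 \<or> mu_pq p q x = -1"
proof -
  have "(-1::int)^n = 1 \<or> (-1::int)^n = -1" for n by (cases "even n") auto
  then show ?thesis by (simp add: mu_pq_def Let_def)
qed

lemma Arf_sum:
  assumes vals: "\<And>x. mu x = 1 \<or> mu x = -1"
  shows "Arf N mu = sgn (\<Sum>x\<in>C2N N. mu x)"
proof -
  let ?A = "{x\<in>C2N N. mu x = 1}" and ?B = "{x\<in>C2N N. mu x = -1}"
  have C: "C2N N = ?A \<union> ?B" using vals by auto
  have fA: "finite ?A" and fB: "finite ?B" using finite_C2N by auto
  have "(\<Sum>x\<in>C2N N. mu x) = (\<Sum>x\<in>?A \<union> ?B. mu x)" using C by (rule arg_cong)
  also have "\<dots> = (\<Sum>x\<in>?A. mu x) + (\<Sum>x\<in>?B. mu x)"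
    by (rule sum.union_disjoint[OF fA fB]) auto
  also have "(\<Sum>x\<in>?A. mu x) = (\<Sum>x\<in>?A. 1)" by (rule sum.cong) auto
  also have "(\<Sum>x\<in>?B. mu x) = (\<Sum>x\<in>?B. -1)" by (rule sum.cong) auto
  finally show ?thesis by (simp add: Arf_def)
qed

lemma of_int_sgn': "real_of_int (sgn k) = sgn (real_of_int k)" by (simp add: sgn_if)

lemma Re_scale: "c > 0 \<Longrightarrow> sgn (Re (complex_of_real c * z)) = sgn (Re z)"
  by (simp add: sgn_mult)

lemma sgnR: "sgn (Re ((1-\<i>) * (1+\<i>)^p * (1-\<i>)^q)) = cls (int p - int q + 1)"
proof (cases "q \<le> p")
  case True
  then obtain d where pd: "p = q + d" using le_Suc_ex by blast
  define t where "t = d div 8"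
  define r where "r = d mod 8"
  have d: "d = 8*t + r" by (simp add: t_def r_def)
  have r8: "r < 8" by (simp add: r_def)
  have pm: "(1+\<i>)^(8*t) = ((1+\<i>)^8)^t" by (rule power_mult)
  have "(1+\<i>)^p * (1-\<i>)^q = ((1+\<i>)*(1-\<i>))^q * (1+\<i>)^(8*t) * (1+\<i>)^r"
    unfolding pd d by (simp add: power_add power_mult_distrib mult_ac)
  also note pm
  also have "(1+\<i>)*(1-\<i>) = 2" by (simp add: complex_eq_iff)
  also have "(1+\<i>)^8 = 16" by (simp add: complex_eq_iff eval_nat_numeral)
  finally have e: "(1-\<i>) * (1+\<i>)^p * (1-\<i>)^q = complex_of_real (2^q * 16^t) * ((1-\<i>)*(1+\<i>)^r)"
    by (simp add: mult_ac)
  have "int p - int q + 1 = int r + 1 + 8 * int t" unfolding pd d by simp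
  then have "(int p - int q + 1) mod 8 = (int r + 1) mod 8" by presburger
  then have m: "cls (int p - int q + 1) = cls (int r + 1)" by (simp only: cls_def)
  have pos: "(0::real) < 2^q * 16^t" by simp
  show ?thesis unfolding e m Re_scale[OF pos] by (rule tab1[OF r8])
next
  case False
  then obtain e where qe: "q = p + e" by (metis le_Suc_ex nat_le_linear)
  define t where "t = e div 8"
  define r where "r = e mod 8"
  have d: "e = 8*t + r" by (simp add: t_def r_def)
  have r8: "r < 8" by (simp add: r_def)
  have pm: "(1-\<i>)^(8*t) = ((1-\<i>)^8)^t" by (rule power_mult)
  have "(1-\<i>) * (1+\<i>)^p * (1-\<i>)^q = ((1+\<i>)*(1-\<i>))^p * (1-\<i>)^(8*t) * (1-\<i>)^(r+1)"
    unfolding qe d by (simp add: power_add power_mult_distrib mult_ac)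
  also note pm
  also have "(1+\<i>)*(1-\<i>) = 2" by (simp add: complex_eq_iff)
  also have "(1-\<i>)^8 = 16" by (simp add: complex_eq_iff eval_nat_numeral)
  finally have e: "(1-\<i>) * (1+\<i>)^p * (1-\<i>)^q = complex_of_real (2^p * 16^t) * ((1-\<i>)^(r+1))"
    by (simp add: mult_ac)
  have "int p - int q + 1 = (1 - int r) + 8 * (- int t)" unfolding qe d by simp
  then have "(int p - int q + 1) mod 8 = (1 - int r) mod 8" by presburger
  then have m: "cls (int p - int q + 1) = cls (1 - int r)" by (simp only: cls_def)
  have pos: "(0::real) < 2^p * 16^t" by simp
  show ?thesis unfolding e m Re_scale[OF pos] by (rule tab2[OF r8])
qed

lemma cos_part: "sgn (cos ((real p - real q) * pi / 4) + sin ((real p - real q) * pi / 4)) = cls (int p - int q + 1)"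
proof -
  define D where "D = int p - int q"
  define t where "t = D div 8"
  define r where "r = D mod 8"
  have D: "D = 8*t + r" by (simp add: t_def r_def)
  have r0: "0 \<le> r" "r < 8" by (simp_all add: r_def)
  have h: "(real p - real q) * pi / 4 = of_int r * pi / 4 + (2*pi) * of_int t"
  proof -
    have "real p - real q = real_of_int D" by (simp add: D_def)
    also have "\<dots> = 8 * real_of_int t + real_of_int r" using D by simp
    finally show ?thesis by (simp add: algebra_simps)
  qed
  have e: "cos ((real p - real q) * pi / 4) + sin ((real p - real q) * pi / 4)
      = cos (of_int r * pi / 4) + sin (of_int r * pi / 4)"
    unfolding h cos_add sin_add cos_int_2pin sin_int_2pin by simp
  have "int p - int q + 1 = (r + 1) + 8 * t" using D unfolding D_def by simp
  then have "(int p - int q + 1) mod 8 = (r + 1) mod 8" by presburger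
  then have m: "cls (int p - int q + 1) = cls (r + 1)" by (simp only: cls_def)
  show ?thesis unfolding e m using tab3 r0 by simp
qed

theorem theorem7p1:
  fixes p q :: nat
  shows "real_of_int (Arf (p + q) (mu_pq p q))
           = sgn (cos ((real p - real q) * pi / 4) + sin ((real p - real q) * pi / 4))
       \<and> Arf (p + q) (mu_pq p q) =
           (if (int p - int q + 1) mod 8 \<in> {1, 2, 3} then 1
            else if (int p - int q + 1) mod 8 \<in> {0, 4} then 0
            else -1)"
proof -
  have "real_of_int (Arf (p + q) (mu_pq p q)) = sgn (\<Sum>x\<in>C2N (p+q). real_of_int (mu_pq p q x))"
    by (simp add: Arf_sum[OF mu_vals] of_int_sgn')
  also have "\<dots> = cls (int p - int q + 1)" by (simp only: S_real sgnR)
  finally have A: "real_of_int (Arf (p + q) (mu_pq p q)) = cls (int p - int q + 1)" .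
  show ?thesis
  proof
    show "real_of_int (Arf (p + q) (mu_pq p q))
           = sgn (cos ((real p - real q) * pi / 4) + sin ((real p - real q) * pi / 4))"
      using A cos_part by simp
    show "Arf (p + q) (mu_pq p q) =
           (if (int p - int q + 1) mod 8 \<in> {1, 2, 3} then 1
            else if (int p - int q + 1) mod 8 \<in> {0, 4} then 0
            else -1)"
      using A unfolding cls_def by (auto split: if_splits)
  qed
qed

end
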